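(* Let $\mathcal T$ be a complete binary tree and let $\mathcal A,\mathcal B,\mathcal C\subseteq\mathcal V(\mathcal T)$. Then $\mathrm{desc}(\mathcal A)\subseteq\mathrm{desc}\big((\mathcal A\cup\mathcal B)\setminus\mathrm{desc}(\mathcal C)\big)\cup\mathrm{desc}\big(\mathcal C\setminus\overline{\mathrm{desc}}(\mathcal B)\big)$.
   Context: $\mathcal V(\mathcal T)$ is the vertex set of the complete binary tree (nodes are binary strings, root is the empty string, children of $u$ are $u0,u1$). For a node $u$, $\mathrm{desc}(u)$ is the set of descendants of $u$ including $u$, and $\overline{\mathrm{desc}}(u)$ the set of descendants of $u$ excluding $u$; for a set $\mathcal U$ of nodes, $\mathrm{desc}(\mathcal U)=\bigcup_{u\in\mathcal U}\mathrm{desc}(u)$ and $\overline{\mathrm{desc}}(\mathcal U)=\bigcup_{u\in\mathcal U}\overline{\mathrm{desc}}(u)$. *)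

theory Defs
  imports Main
begin

text \<open>Nodes of the complete binary tree are binary strings (bool lists); the root is
  the empty list, the children of u are u @ [False] and u @ [True].
  v is a descendant of u iff u is a prefix of v.\<close>

type_synonym node = "bool list"

definition desc :: "node \<Rightarrow> node set" where
  "desc u = {v. \<exists>w. v = u @ w}"

definition sdesc :: "node \<Rightarrow> node set" where
  "sdesc u = desc u - {u}"

definition descS :: "node set \<Rightarrow> node set" where
  "descS U = (\<Union>u\<in>U. desc u)"

definition sdescS :: "node set \<Rightarrow> node set" where
  "sdescS U = (\<Union>u\<in>U. sdesc u)"

end

theory Submission
  imports Defs
begin

lemma desc_trans: "v \<in> desc u \<Longrightarrow> x \<in> desc v \<Longrightarrow> x \<in> desc u"
  unfolding desc_def by auto

lemma desc_len: "v \<in> desc u \<Longrightarrow> v \<noteq> u \<Longrightarrow> length u < length v"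
  unfolding desc_def by auto

theorem proposition2p3:
  fixes A B C :: "node set"
  shows "descS A \<subseteq> descS ((A \<union> B) - descS C) \<union> descS (C - sdescS B)"
proof
  fix x assume "x \<in> descS A"
  then obtain a where a: "a \<in> A" "x \<in> desc a" unfolding descS_def by auto
  show "x \<in> descS ((A \<union> B) - descS C) \<union> descS (C - sdescS B)"
  proof (cases "a \<in> descS C")
    case False
    then show ?thesis using a unfolding descS_def by auto
  next
    case True
    then obtain c where c: "c \<in> C" "a \<in> desc c" unfolding descS_def by auto
    define P where "P = (\<lambda>n. \<exists>m. m \<in> B \<union> C \<and> a \<in> desc m \<and> length m = n)"
    have "P (length c)" using c unfolding P_def by auto
    then obtain n where n: "P n" "\<And>k. P k \<Longrightarrow> n \<le> k"
      using ex_has_least_nat[of P "length c" id] by auto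
    then obtain m where m: "m \<in> B \<union> C" "a \<in> desc m" "length m = n" unfolding P_def by auto
    have minm: "\<And>p. p \<in> B \<union> C \<Longrightarrow> m \<in> desc p \<Longrightarrow> p = m"
    proof (rule ccontr)
      fix p assume p: "p \<in> B \<union> C" "m \<in> desc p" "p \<noteq> m"
      have "P (length p)" unfolding P_def using p m desc_trans by blast
      hence "n \<le> length p" by (rule n(2))
      moreover have "length p < length m" using desc_len p by auto
      ultimately show False using m by auto
    qed
    have xm: "x \<in> desc m" using m a desc_trans by blast
    show ?thesis
    proof (cases "m \<in> C")
      case True
      have "m \<notin> sdescS B"
        using minm unfolding sdescS_def sdesc_def by auto
      then show ?thesis using True xm unfolding descS_def by auto
    next
      case False
      have "m \<notin> descS C"
        using minm False unfolding descS_def by auto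
      then show ?thesis using False m xm unfolding descS_def by auto
    qed
  qed
qed

end
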